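(* Let $a,b\in\Sigma_d$ and let $p\in\mathbb R^d_+$ satisfy $\min(a_i,b_i)\le p_i\le\max(a_i,b_i)$ for all $1\le i\le d$. Let $c=p/\sum_ip_i\in\Sigma_d$. Then $\max(\|a-c\|_1,\|b-c\|_1)\le\|a-b\|_1$.
   Context: $\Sigma_d=\{p\in\mathbb R^d_+:\sum_ip_i=1\}$ is the probability simplex; $\|\cdot\|_1$ is the $\ell_1$ norm. *)

theory Defs
  imports "HOL-Analysis.Analysis"
begin

definition prob_simplex :: "(real ^ 'd) set" where
  "prob_simplex = {p. (\<forall>i. p $ i \<ge> 0) \<and> (\<Sum>i\<in>UNIV. p $ i) = 1}"

definition l1norm :: "real ^ 'd \<Rightarrow> real" where
  "l1norm x = (\<Sum>i\<in>UNIV. \<bar>x $ i\<bar>)"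

end

theory Submission
  imports Defs
begin

lemma side:
  fixes a b p :: "real ^ 'd"
  assumes "a \<in> prob_simplex" and "b \<in> prob_simplex"
    and p0: "\<forall>i. p $ i \<ge> 0"
    and pb: "\<forall>i. min (a $ i) (b $ i) \<le> p $ i \<and> p $ i \<le> max (a $ i) (b $ i)"
  shows "l1norm (a - (1 / (\<Sum>i\<in>UNIV. p $ i)) *\<^sub>R p) \<le> l1norm (a - b)"
proof -
  define S where "S = (\<Sum>i\<in>UNIV. p $ i)"
  define c where "c = (1 / S) *\<^sub>R p"
  have sa: "(\<Sum>i\<in>UNIV. a $ i) = 1" and sb: "(\<Sum>i\<in>UNIV. b $ i) = 1"
    using assms(1,2) by (auto simp: prob_simplex_def)
  have S0: "S \<ge> 0" unfolding S_def using p0 by (simp add: sum_nonneg)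
  define u where "u i = max (a $ i - p $ i) 0" for i
  define v where "v i = max (p $ i - a $ i) 0" for i
  define P where "P i = max (a $ i - b $ i) 0" for i
  define N where "N i = max (b $ i - a $ i) 0" for i
  have uP: "u i \<le> P i" for i using pb[rule_format, of i] unfolding u_def P_def by auto
  have vN: "v i \<le> N i" for i using pb[rule_format, of i] unfolding v_def N_def by auto
  have PN: "\<bar>a $ i - b $ i\<bar> = P i + N i" "a $ i - b $ i = P i - N i" for i
    unfolding P_def N_def by auto
  have uv: "\<bar>a $ i - p $ i\<bar> = u i + v i" "p $ i - a $ i = v i - u i" for i
    unfolding u_def v_def by auto
  have D: "l1norm (a - b) = sum P UNIV + sum N UNIV"
    unfolding l1norm_def using PN by (simp add: sum.distrib)
  have PNeq: "sum P UNIV - sum N UNIV = 0"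
  proof -
    have "sum P UNIV - sum N UNIV = (\<Sum>i\<in>UNIV. a $ i - b $ i)"
      using PN by (simp add: sum_subtractf)
    also have "\<dots> = 0" using sa sb by (simp add: sum_subtractf)
    finally show ?thesis .
  qed
  have Sm1: "S - 1 = sum v UNIV - sum u UNIV"
  proof -
    have "S - 1 = (\<Sum>i\<in>UNIV. p $ i - a $ i)" unfolding S_def using sa by (simp add: sum_subtractf)
    also have "\<dots> = sum v UNIV - sum u UNIV" using uv by (simp add: sum_subtractf)
    finally show ?thesis .
  qed
  have ap: "l1norm (a - p) = sum u UNIV + sum v UNIV"
    unfolding l1norm_def using uv by (simp add: sum.distrib)
  have pc: "l1norm (p - c) \<le> \<bar>S - 1\<bar>"
  proof (cases "S = 0")
    case True
    then have "\<forall>i\<in>UNIV. p $ i = 0" unfolding S_def using p0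
      by (subst sum_nonneg_eq_0_iff[symmetric]) auto
    then show ?thesis unfolding c_def l1norm_def using True by simp
  next
    case False
    then have Sp: "S > 0" using S0 by simp
    have "l1norm (p - c) = (\<Sum>i\<in>UNIV. p $ i * \<bar>1 - 1/S\<bar>)"
      unfolding l1norm_def c_def
    proof (rule sum.cong)
      fix i :: 'd
      have "p $ i - p $ i / S = p $ i * (1 - 1/S)" by (simp add: algebra_simps)
      then show "\<bar>(p - (1 / S) *\<^sub>R p) $ i\<bar> = p $ i * \<bar>1 - 1/S\<bar>"
        using p0 by (simp add: abs_mult)
    qed simp
    also have "\<dots> = S * \<bar>1 - 1/S\<bar>" unfolding S_def by (simp add: sum_distrib_right)
    also have "\<dots> = \<bar>S - 1\<bar>" using Sp
      by (simp add: abs_if field_simps)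
    finally show ?thesis by simp
  qed
  have tri: "l1norm (a - c) \<le> l1norm (a - p) + l1norm (p - c)"
    unfolding l1norm_def
    by (simp add: sum.distrib[symmetric] sum_mono abs_triangle_ineq[where a="a $ i - p $ i" for i, simplified])
  have su: "sum u UNIV \<le> sum P UNIV" by (rule sum_mono) (simp add: uP)
  have sv: "sum v UNIV \<le> sum N UNIV" by (rule sum_mono) (simp add: vN)
  have "l1norm (a - c) \<le> l1norm (a - b)"
    using tri ap pc Sm1 su sv D PNeq by linarith
  then show ?thesis unfolding c_def S_def .
qed

theorem lemma5:
  fixes a b p :: "real ^ 'd"
  assumes "a \<in> prob_simplex" and "b \<in> prob_simplex"
    and "\<forall>i. p $ i \<ge> 0"
    and "\<forall>i. min (a $ i) (b $ i) \<le> p $ i \<and> p $ i \<le> max (a $ i) (b $ i)"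
  defines "c \<equiv> (1 / (\<Sum>i\<in>UNIV. p $ i)) *\<^sub>R p"
  shows "max (l1norm (a - c)) (l1norm (b - c)) \<le> l1norm (a - b)"
proof -
  have 1: "l1norm (a - c) \<le> l1norm (a - b)"
    unfolding c_def by (rule side[OF assms(1-4)])
  have "\<forall>i. min (b $ i) (a $ i) \<le> p $ i \<and> p $ i \<le> max (b $ i) (a $ i)"
    using assms(4) by (simp add: min.commute max.commute)
  then have "l1norm (b - c) \<le> l1norm (b - a)"
    unfolding c_def by (rule side[OF assms(2,1,3)])
  moreover have "l1norm (b - a) = l1norm (a - b)"
    unfolding l1norm_def by (simp add: abs_minus_commute)
  ultimately show ?thesis using 1 by simp
qed

end
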